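(* Let $L$ denote the problem of finding both the largest and the smallest of $n$ elements by pairwise comparisons. Then for every integer $k\ge 0$, $D_k(L,n)=\min\{n+k-1,\ \lceil 3n/2\rceil-2\}$.
   Context: Problem $L$ on $n$ elements: the input is an assignment of $n$ distinct real numbers $a_1,\dots,a_n$ to $n$ labeled elements; a query is a pair $\{i,j\}$ and its answer tells whether $a_i<a_j$; the goal is to determine which element is the largest and which is the smallest. $D_k(L,n)$ is defined by the following game between a Questioner and an Adversary. The Adversary chooses an input (the current input). The Questioner, who always knows the current input, asks queries one after another; each query is answered according to the current input. Between queries the Adversary may replace the current input by any other input consistent with all answers given so far, but at most $k$ times in total. The game ends as soon as the answers given determine both the largest and the smallest element. $D_k(L,n)$ is the number of queries asked when the Questioner minimizes and the Adversary maximizes this number. *)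

theory Defs
  imports Complex_Main
begin

text \<open>Elements are 0..n-1. An input is an injective assignment of reals to them
  (normalised to 0 outside {..<n} so that inputs are determined by their values on
  the elements). An answer to a query is recorded as an ordered pair (i,j) meaning a i < a j.\<close>

definition inputs :: "nat \<Rightarrow> (nat \<Rightarrow> real) set" where
  "inputs n = {a. inj_on a {..<n} \<and> (\<forall>i\<ge>n. a i = 0)}"

definition consistent :: "(nat \<Rightarrow> real) \<Rightarrow> (nat \<times> nat) set \<Rightarrow> bool" where
  "consistent a A \<longleftrightarrow> (\<forall>(i,j)\<in>A. a i < a j)"

definition determined :: "nat \<Rightarrow> (nat \<times> nat) set \<Rightarrow> bool" where
  "determined n A \<longleftrightarrow> (\<exists>M<n. \<exists>m<n. \<forall>a\<in>inputs n. consistent a A \<longrightarrow>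
      (\<forall>i<n. a i \<le> a M) \<and> (\<forall>i<n. a m \<le> a i))"

definition answer :: "(nat \<Rightarrow> real) \<Rightarrow> nat \<Rightarrow> nat \<Rightarrow> nat \<times> nat" where
  "answer a i j = (if a i < a j then (i, j) else (j, i))"

text \<open>qwin m n A a k: in the position where answers A have been given, the current
  input is a, the Adversary has k changes left and the Questioner is to ask,
  the Questioner can guarantee that the game ends after at most m further queries.
  After each answer the Adversary may replace the current input by a different
  consistent one, using up one change.\<close>
primrec qwin :: "nat \<Rightarrow> nat \<Rightarrow> (nat \<times> nat) set \<Rightarrow> (nat \<Rightarrow> real) \<Rightarrow> nat \<Rightarrow> bool" where
  "qwin 0 n A a k \<longleftrightarrow> determined n A"
| "qwin (Suc m) n A a k \<longleftrightarrow> determined n A \<or>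
     (\<exists>i<n. \<exists>j<n. i \<noteq> j \<and>
        (let A' = insert (answer a i j) A in
           qwin m n A' a k \<and>
           (\<forall>b\<in>inputs n. 0 < k \<and> b \<noteq> a \<and> consistent b A' \<longrightarrow> qwin m n A' b (k - 1))))"

definition D :: "nat \<Rightarrow> nat \<Rightarrow> nat" where
  "D k n = (LEAST m. \<forall>a\<in>inputs n. qwin m n {} a k)"

end

theory Submission
  imports Defs
begin

definition UU :: "nat \<Rightarrow> (nat \<times> nat) set \<Rightarrow> nat set" where
  "UU n A = {x. x < n \<and> (\<forall>y<n. (x,y) \<notin> A)}"
definition LL :: "nat \<Rightarrow> (nat \<times> nat) set \<Rightarrow> nat set" where
  "LL n A = {y. y < n \<and> (\<forall>x<n. (x,y) \<notin> A)}"

definition invar :: "nat \<Rightarrow> (nat \<times> nat) set \<Rightarrow> (nat \<Rightarrow> real) \<Rightarrow> bool" where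
  "invar n A a \<longleftrightarrow> a \<in> inputs n \<and> consistent a A \<and> (\<forall>(x,y)\<in>A. x < n \<and> y < n)"

lemma UU_ins: "j < n \<Longrightarrow> UU n (insert (i,j) A) = UU n A - {i}"
  unfolding UU_def by auto
lemma LL_ins: "i < n \<Longrightarrow> LL n (insert (i,j) A) = LL n A - {j}"
  unfolding LL_def by auto
lemma fin_UU[simp]: "finite (UU n A)" unfolding UU_def by auto
lemma fin_LL[simp]: "finite (LL n A)" unfolding LL_def by auto
lemma UU_lt: "x \<in> UU n A \<Longrightarrow> x < n" unfolding UU_def by auto
lemma LL_lt: "x \<in> LL n A \<Longrightarrow> x < n" unfolding LL_def by auto

lemma consistent_insert[simp]: "consistent a (insert (i,j) A) \<longleftrightarrow> a i < a j \<and> consistent a A"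
  unfolding consistent_def by auto
lemma consistent_empty[simp]: "consistent a {}"
  unfolding consistent_def by auto

lemma inputs_inj: "a \<in> inputs n \<Longrightarrow> i < n \<Longrightarrow> j < n \<Longrightarrow> i \<noteq> j \<Longrightarrow> a i \<noteq> a j"
  unfolding inputs_def inj_on_def by auto

lemma answer_cases: "a \<in> inputs n \<Longrightarrow> i < n \<Longrightarrow> j < n \<Longrightarrow> i \<noteq> j \<Longrightarrow>
   \<exists>x y. answer a i j = (x,y) \<and> a x < a y \<and> {x,y} = {i,j}"
  using inputs_inj[of a n i j] unfolding answer_def by (auto simp: less_le)

lemma inv_insert: "invar n A a \<Longrightarrow> x < n \<Longrightarrow> y < n \<Longrightarrow> a x < a y \<Longrightarrow> invar n (insert (x,y) A) a"
  unfolding invar_def by auto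

lemma inv_change: "invar n A a \<Longrightarrow> b \<in> inputs n \<Longrightarrow> consistent b A \<Longrightarrow> invar n A b"
  unfolding invar_def by auto

lemma ex_max: "(n::nat) \<ge> 1 \<Longrightarrow> \<exists>x<n. \<forall>i<n. (a::nat\<Rightarrow>real) i \<le> a x"
proof (induction n)
  case 0 then show ?case by simp
next
  case (Suc n)
  show ?case
  proof (cases "n = 0")
    case True then show ?thesis by auto
  next
    case False
    then obtain x where x: "x < n" "\<forall>i<n. a i \<le> a x" using Suc by auto
    show ?thesis
    proof (cases "a n \<le> a x")
      case True then show ?thesis using x by (metis less_Suc_eq less_SucI)
    next
      case False then show ?thesis using x by (metis less_Suc_eq linorder_not_le order_less_imp_le order_trans lessI)
    qed
  qed
qed

lemma ex_min: "(n::nat) \<ge> 1 \<Longrightarrow> \<exists>x<n. \<forall>i<n. (a::nat\<Rightarrow>real) x \<le> a i"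
  using ex_max[of n "\<lambda>i. - a i"] by auto

lemma max_in_UU: "consistent a A \<Longrightarrow> x < n \<Longrightarrow> \<forall>i<n. a i \<le> a x \<Longrightarrow> x \<in> UU n A"
  unfolding UU_def consistent_def by (force)

lemma min_in_LL: "consistent a A \<Longrightarrow> x < n \<Longrightarrow> \<forall>i<n. a x \<le> a i \<Longrightarrow> x \<in> LL n A"
  unfolding LL_def consistent_def by (force)

lemma UU_ne: "n \<ge> 1 \<Longrightarrow> consistent a A \<Longrightarrow> UU n A \<noteq> {}"
  using ex_max[of n a] max_in_UU by blast
lemma LL_ne: "n \<ge> 1 \<Longrightarrow> consistent a A \<Longrightarrow> LL n A \<noteq> {}"
  using ex_min[of n a] min_in_LL by blast

lemma det1:
  assumes "n \<ge> 1" "card (UU n A) \<le> 1" "card (LL n A) \<le> 1"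
  shows "determined n A"
proof (cases "\<exists>c\<in>inputs n. consistent c A")
  case False
  moreover have "0 < n" using assms(1) by simp
  ultimately show ?thesis unfolding determined_def by blast
next
  case True
  then obtain c where c: "c \<in> inputs n" "consistent c A" by auto
  obtain M where M: "M < n" "\<forall>i<n. c i \<le> c M" using ex_max[OF assms(1)] by blast
  obtain m where m: "m < n" "\<forall>i<n. c m \<le> c i" using ex_min[OF assms(1)] by blast
  have MU: "M \<in> UU n A" using max_in_UU[OF c(2) M(1,2)] .
  have mL: "m \<in> LL n A" using min_in_LL[OF c(2) m(1,2)] .
  have U1: "\<And>x. x \<in> UU n A \<Longrightarrow> x = M" using assms(2) MU
    by (metis card_le_Suc0_iff_eq fin_UU One_nat_def)
  have L1: "\<And>x. x \<in> LL n A \<Longrightarrow> x = m" using assms(3) mL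
    by (metis card_le_Suc0_iff_eq fin_LL One_nat_def)
  show ?thesis unfolding determined_def
  proof (rule exI[of _ M], rule conjI[OF M(1)], rule exI[of _ m], rule conjI[OF m(1)], intro ballI impI)
    fix a assume a: "a \<in> inputs n" "consistent a A"
    obtain x where x: "x < n" "\<forall>i<n. a i \<le> a x" using ex_max[OF assms(1)] by blast
    obtain y where y: "y < n" "\<forall>i<n. a y \<le> a i" using ex_min[OF assms(1)] by blast
    have "x = M" using U1 max_in_UU[OF a(2) x] by blast
    moreover have "y = m" using L1 min_in_LL[OF a(2) y] by blast
    ultimately show "(\<forall>i<n. a i \<le> a M) \<and> (\<forall>i<n. a m \<le> a i)" using x y by auto
  qed
qed

lemma det2:
  assumes "invar n A a" "determined n A"
  shows "card (UU n A) \<le> 1 \<and> card (LL n A) \<le> 1"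
proof -
  obtain M m where Mm: "M < n" "m < n" "\<forall>b\<in>inputs n. consistent b A \<longrightarrow>
      (\<forall>i<n. b i \<le> b M) \<and> (\<forall>i<n. b m \<le> b i)"
    using assms(2) unfolding determined_def by blast
  have a: "a \<in> inputs n" "consistent a A" "\<forall>(x,y)\<in>A. x < n \<and> y < n"
    using assms(1) unfolding invar_def by auto
  define R where "R = (\<Sum>i<n. \<bar>a i\<bar>)"
  have R: "\<And>i. i < n \<Longrightarrow> \<bar>a i\<bar> \<le> R"
    unfolding R_def by (rule member_le_sum) auto
  have "UU n A \<subseteq> {M}"
  proof
    fix u assume u: "u \<in> UU n A"
    have un: "u < n" using u UU_lt by auto
    define b where "b = a(u := R + 1)"
    have bin: "b \<in> inputs n"
      using a(1) un R unfolding inputs_def b_def inj_on_def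
      by (auto, (smt (verit, best))+)
    have bc: "consistent b A"
      unfolding consistent_def
    proof (clarify)
      fix x y assume xy: "(x,y) \<in> A"
      have xyn: "x < n" "y < n" using a(3) xy by auto
      have "x \<noteq> u" using u xy xyn unfolding UU_def by auto
      moreover have "a x < a y" using a(2) xy unfolding consistent_def by auto
      ultimately show "b x < b y" unfolding b_def using R[OF xyn(1)] by auto
    qed
    have "b u \<le> b M" using Mm(3) bin bc un by auto
    then show "u \<in> {M}" unfolding b_def using R[OF Mm(1)] by (auto split: if_splits)
  qed
  moreover have "LL n A \<subseteq> {m}"
  proof
    fix u assume u: "u \<in> LL n A"
    have un: "u < n" using u LL_lt by auto
    define b where "b = a(u := - R - 1)"
    have bin: "b \<in> inputs n"
      using a(1) un R unfolding inputs_def b_def inj_on_def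
      by (auto, (smt (verit, best))+)
    have bc: "consistent b A"
      unfolding consistent_def
    proof (clarify)
      fix x y assume xy: "(x,y) \<in> A"
      have xyn: "x < n" "y < n" using a(3) xy by auto
      have "y \<noteq> u" using u xy xyn unfolding LL_def by auto
      moreover have "a x < a y" using a(2) xy unfolding consistent_def by auto
      ultimately show "b x < b y" unfolding b_def using R[OF xyn(2)] by auto
    qed
    have "b m \<le> b u" using Mm(3) bin bc un by auto
    then show "u \<in> {m}" unfolding b_def using R[OF Mm(2)] by (auto split: if_splits)
  qed
  ultimately show ?thesis by (metis card_mono finite.emptyI finite_insert is_singleton_altdef is_singleton_def)
qed

lemma int_card_Diff1: "finite S \<Longrightarrow> int (card (S - {x})) = int (card S) - (if x \<in> S then 1 else 0)"
proof (cases "x \<in> S")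
  case True
  assume f: "finite S"
  have "card S \<ge> 1" using True f by (metis One_nat_def Suc_leI card_gt_0_iff empty_iff)
  then show ?thesis using True f by (simp add: card_Diff_singleton of_nat_diff)
next
  case False then show ?thesis by simp
qed

lemma card_ins:
  assumes "i < n" "j < n" "i \<noteq> j"
  shows "int (card (UU n (insert (i,j) A))) = int (card (UU n A)) - (if i \<in> UU n A then 1 else 0)"
    and "int (card (LL n (insert (i,j) A))) = int (card (LL n A)) - (if j \<in> LL n A then 1 else 0)"
    and "int (card (UU n (insert (i,j) A) \<inter> LL n (insert (i,j) A))) = int (card (UU n A \<inter> LL n A))
          - (if i \<in> UU n A \<inter> LL n A then 1 else 0) - (if j \<in> UU n A \<inter> LL n A then 1 else 0)"
proof -
  show "int (card (UU n (insert (i,j) A))) = int (card (UU n A)) - (if i \<in> UU n A then 1 else 0)"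
    unfolding UU_ins[OF assms(2)] by (rule int_card_Diff1) simp
  show "int (card (LL n (insert (i,j) A))) = int (card (LL n A)) - (if j \<in> LL n A then 1 else 0)"
    unfolding LL_ins[OF assms(1)] by (rule int_card_Diff1) simp
  have e: "UU n (insert (i,j) A) \<inter> LL n (insert (i,j) A) = ((UU n A \<inter> LL n A) - {i}) - {j}"
    using UU_ins[OF assms(2)] LL_ins[OF assms(1)] by auto
  have f: "finite (UU n A \<inter> LL n A)" by simp
  have j: "(j \<in> (UU n A \<inter> LL n A) - {i}) = (j \<in> UU n A \<inter> LL n A)" using assms(3) by auto
  show "int (card (UU n (insert (i,j) A) \<inter> LL n (insert (i,j) A))) = int (card (UU n A \<inter> LL n A))
          - (if i \<in> UU n A \<inter> LL n A then 1 else 0) - (if j \<in> UU n A \<inter> LL n A then 1 else 0)"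
    unfolding e int_card_Diff1[OF finite_Diff[OF f]] int_card_Diff1[OF f] j by simp
qed

definition G2 :: "nat \<Rightarrow> (nat \<times> nat) set \<Rightarrow> int" where
  "G2 n A = int (card (UU n A)) + int (card (LL n A)) - int (card (UU n A \<inter> LL n A)) div 2"

lemma cards_basic:
  assumes "n \<ge> 1" "invar n A a"
  shows "card (UU n A) \<ge> 1" "card (LL n A) \<ge> 1"
    "card (UU n A \<inter> LL n A) \<le> card (UU n A)" "card (UU n A \<inter> LL n A) \<le> card (LL n A)"
proof -
  have c: "consistent a A" using assms(2) unfolding invar_def by auto
  show "card (UU n A) \<ge> 1" using UU_ne[OF assms(1) c] by (simp add: Suc_le_eq card_gt_0_iff)
  show "card (LL n A) \<ge> 1" using LL_ne[OF assms(1) c] by (simp add: Suc_le_eq card_gt_0_iff)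
  show "card (UU n A \<inter> LL n A) \<le> card (UU n A)" by (rule card_mono) auto
  show "card (UU n A \<inter> LL n A) \<le> card (LL n A)" by (rule card_mono) auto
qed

lemma div2_le: "(f::int) \<ge> 2 \<Longrightarrow> f div 2 \<le> f - 1" by linarith

lemma G2_ge2: "n \<ge> 1 \<Longrightarrow> invar n A a \<Longrightarrow> G2 n A \<ge> 2"
proof -
  assume a: "n \<ge> 1" "invar n A a"
  note c = cards_basic[OF a]
  show ?thesis
  proof (cases "card (UU n A \<inter> LL n A) \<le> 1")
    case True
    then have "int (card (UU n A \<inter> LL n A)) div 2 = 0" by simp
    then show ?thesis using c unfolding G2_def by simp
  next
    case False
    then have "int (card (UU n A \<inter> LL n A)) div 2 \<le> int (card (UU n A \<inter> LL n A)) - 1"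
      by (intro div2_le) simp
    then show ?thesis using c False unfolding G2_def by simp
  qed
qed

lemma not_det_card: "n \<ge> 1 \<Longrightarrow> \<not> determined n A \<Longrightarrow> card (UU n A) \<ge> 2 \<or> card (LL n A) \<ge> 2"
  using det1[of n A] by linarith

lemma two_elems: "finite S \<Longrightarrow> card S \<ge> 2 \<Longrightarrow> x \<in> S \<Longrightarrow> \<exists>y\<in>S. y \<noteq> x"
  by (metis card_le_Suc0_iff_eq not_less_eq_eq numeral_2_eq_2)

lemma two_elems': "finite S \<Longrightarrow> card S \<ge> 2 \<Longrightarrow> \<exists>x\<in>S. \<exists>y\<in>S. y \<noteq> x"
  by (metis card_le_Suc0_iff_eq not_less_eq_eq numeral_2_eq_2)

lemma ub1_move:
  assumes "n \<ge> 1" "invar n A a" "\<not> determined n A"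
  shows "\<exists>i<n. \<exists>j<n. i \<noteq> j \<and> G2 n (insert (i,j) A) \<le> G2 n A - 1 \<and> G2 n (insert (j,i) A) \<le> G2 n A - 1"
proof -
  let ?U = "UU n A" and ?L = "LL n A"
  have cb: "card ?U \<ge> 1" "card ?L \<ge> 1" "card (?U \<inter> ?L) \<le> card ?U" "card (?U \<inter> ?L) \<le> card ?L"
    using cards_basic[OF assms(1,2)] by auto
  show ?thesis
  proof (cases "card (?U \<inter> ?L) \<ge> 2")
    case True
    then obtain i j where ij: "i \<in> ?U \<inter> ?L" "j \<in> ?U \<inter> ?L" "j \<noteq> i"
      using two_elems'[of "?U \<inter> ?L"] by auto
    have n: "i < n" "j < n" using ij UU_lt by auto
    show ?thesis
      apply (rule exI[of _ i], rule conjI[OF n(1)], rule exI[of _ j], rule conjI[OF n(2)])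
      using card_ins[OF n(1) n(2) ij(3)[symmetric], of A] card_ins[OF n(2) n(1) ij(3), of A] ij(1,2,3)
         div_add_self2[of "int (card (?U \<inter> ?L)) - 2" 2]
      unfolding G2_def by simp
  next
    case False
    then have f1: "card (?U \<inter> ?L) \<le> 1" by simp
    have "card ?U \<ge> 2 \<or> card ?L \<ge> 2" using not_det_card assms by auto
    then show ?thesis
    proof
      assume u2: "card ?U \<ge> 2"
      have "\<not> ?U \<subseteq> ?L"
      proof
        assume "?U \<subseteq> ?L" then have "?U \<inter> ?L = ?U" by auto
        then show False using u2 f1 by auto
      qed
      then obtain x where x: "x \<in> ?U" "x \<notin> ?L" by auto
      obtain y where y: "y \<in> ?U" "y \<noteq> x" using two_elems[OF _ u2 x(1)] by auto
      have n: "x < n" "y < n" using x y UU_lt by auto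
      have d0: "int (card (?U \<inter> ?L)) div 2 = 0" using f1 by simp
      have d1: "int (card (UU n (insert (x,y) A) \<inter> LL n (insert (x,y) A))) div 2 = 0"
        using card_ins(3)[OF n(1) n(2) y(2)[symmetric], of A] f1 by auto
      have d2: "int (card (UU n (insert (y,x) A) \<inter> LL n (insert (y,x) A))) div 2 = 0"
        using card_ins(3)[OF n(2) n(1) y(2), of A] f1 by auto
      show ?thesis
        apply (rule exI[of _ x], rule conjI[OF n(1)], rule exI[of _ y], rule conjI[OF n(2)])
        using card_ins(1,2)[OF n(1) n(2) y(2)[symmetric], of A] card_ins(1,2)[OF n(2) n(1) y(2), of A] x y
        unfolding G2_def d0 d1 d2 by simp
    next
      assume l2: "card ?L \<ge> 2"
      have "\<not> ?L \<subseteq> ?U"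
      proof
        assume "?L \<subseteq> ?U" then have "?U \<inter> ?L = ?L" by auto
        then show False using l2 f1 by auto
      qed
      then obtain x where x: "x \<in> ?L" "x \<notin> ?U" by auto
      obtain y where y: "y \<in> ?L" "y \<noteq> x" using two_elems[OF _ l2 x(1)] by auto
      have n: "x < n" "y < n" using x y LL_lt by auto
      have d0: "int (card (?U \<inter> ?L)) div 2 = 0" using f1 by simp
      have d1: "int (card (UU n (insert (x,y) A) \<inter> LL n (insert (x,y) A))) div 2 = 0"
        using card_ins(3)[OF n(1) n(2) y(2)[symmetric], of A] f1 by auto
      have d2: "int (card (UU n (insert (y,x) A) \<inter> LL n (insert (y,x) A))) div 2 = 0"
        using card_ins(3)[OF n(2) n(1) y(2), of A] f1 by auto
      show ?thesis
        apply (rule exI[of _ x], rule conjI[OF n(1)], rule exI[of _ y], rule conjI[OF n(2)])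
        using card_ins(1,2)[OF n(1) n(2) y(2)[symmetric], of A] card_ins(1,2)[OF n(2) n(1) y(2), of A] x y
        unfolding G2_def d0 d1 d2 by simp
    qed
  qed
qed

lemma answer_or: "answer a i j = (i,j) \<or> answer a i j = (j,i)"
  unfolding answer_def by auto

lemma answer_props:
  assumes "a \<in> inputs n" "i < n" "j < n" "i \<noteq> j"
  obtains x y where "answer a i j = (x,y)" "a x < a y" "x < n" "y < n" "x \<noteq> y"
    "(x = i \<and> y = j) \<or> (x = j \<and> y = i)"
proof -
  have "a i \<noteq> a j" using inputs_inj[OF assms] .
  then show ?thesis using that assms unfolding answer_def
    by (cases "a i < a j") (auto simp: not_less less_le)
qed

lemma ub1: "n \<ge> 1 \<Longrightarrow> invar n A a \<Longrightarrow> G2 n A \<le> int m + 2 \<Longrightarrow> qwin m n A a k"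
proof (induction m arbitrary: A a k)
  case (0 A a k)
  have ain: "a \<in> inputs n" using 0(2) unfolding invar_def by auto
  have "determined n A"
  proof (rule ccontr)
    assume "\<not> determined n A"
    then obtain i j where ij: "i < n" "j < n" "i \<noteq> j" "G2 n (insert (i,j) A) \<le> G2 n A - 1"
        "G2 n (insert (j,i) A) \<le> G2 n A - 1"
      using ub1_move[OF 0(1,2)] by blast
    obtain x y where xy: "answer a i j = (x,y)" "a x < a y" "x < n" "y < n"
        "(x = i \<and> y = j) \<or> (x = j \<and> y = i)"
      using answer_props[OF ain ij(1,2,3)] by metis
    have "invar n (insert (x,y) A) a" using inv_insert[OF 0(2) xy(3,4,2)] .
    then have "G2 n (insert (x,y) A) \<ge> 2" using G2_ge2 0(1) by blast
    moreover have "G2 n (insert (x,y) A) \<le> G2 n A - 1" using xy(5) ij(4,5) by auto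
    ultimately have "G2 n A \<ge> 3" by linarith
    then show False using 0(3) by linarith
  qed
  then show ?case by simp
next
  case (Suc m A a k)
  have ain: "a \<in> inputs n" using Suc(3) unfolding invar_def by auto
  show ?case
  proof (cases "determined n A")
    case True then show ?thesis by simp
  next
    case False
    then obtain i j where ij: "i < n" "j < n" "i \<noteq> j" "G2 n (insert (i,j) A) \<le> G2 n A - 1"
        "G2 n (insert (j,i) A) \<le> G2 n A - 1"
      using ub1_move[OF Suc(2,3)] by blast
    obtain x y where xy: "answer a i j = (x,y)" "a x < a y" "x < n" "y < n"
        "(x = i \<and> y = j) \<or> (x = j \<and> y = i)"
      using answer_props[OF ain ij(1,2,3)] by metis
    have invar': "invar n (insert (x,y) A) a" using inv_insert[OF Suc(3) xy(3,4,2)] .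
    have G': "G2 n (insert (x,y) A) \<le> int m + 2" using xy(5) ij(4,5) Suc(4) by auto
    have q1: "qwin m n (insert (x,y) A) a k" using Suc.IH[OF Suc(2) invar' G'] .
    have q2: "\<forall>b\<in>inputs n. 0 < k \<and> b \<noteq> a \<and> consistent b (insert (x,y) A) \<longrightarrow>
        qwin m n (insert (x,y) A) b (k - 1)"
      using Suc.IH[OF Suc(2) inv_change[OF invar'] G'] by blast
    have L: "let A' = insert (answer a i j) A in qwin m n A' a k \<and>
           (\<forall>b\<in>inputs n. 0 < k \<and> b \<noteq> a \<and> consistent b A' \<longrightarrow> qwin m n A' b (k - 1))"
      unfolding Let_def xy(1) using q1 q2 by blast
    have "\<exists>i<n. \<exists>j<n. i \<noteq> j \<and> (let A' = insert (answer a i j) A in qwin m n A' a k \<and>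
           (\<forall>b\<in>inputs n. 0 < k \<and> b \<noteq> a \<and> consistent b A' \<longrightarrow> qwin m n A' b (k - 1)))"
      by (rule exI[of _ i], rule conjI[OF ij(1)], rule exI[of _ j], rule conjI[OF ij(2)], rule conjI[OF ij(3)], rule L)
    then show ?thesis by (simp only: qwin.simps(2) disj_not1) simp
  qed
qed

definition gam :: "nat \<Rightarrow> (nat \<times> nat) set \<Rightarrow> (nat \<Rightarrow> real) \<Rightarrow> bool" where
  "gam n A a \<longleftrightarrow> (\<exists>w\<in>UU n A \<inter> LL n A. (\<forall>q\<in>LL n A - UU n A. a q < a w) \<and> (\<forall>p\<in>UU n A - LL n A. a w < a p))"

definition GG :: "nat \<Rightarrow> (nat \<times> nat) set \<Rightarrow> (nat \<Rightarrow> real) \<Rightarrow> int" where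
  "GG n A a = int (card (UU n A \<union> LL n A)) + (if gam n A a then 1 else 0)"

lemma argmin: "finite S \<Longrightarrow> S \<noteq> {} \<Longrightarrow> \<exists>x\<in>S. \<forall>y\<in>S. (a::nat\<Rightarrow>real) x \<le> a y"
proof -
  assume f: "finite S" and ne: "S \<noteq> {}"
  have "Min (a`S) \<in> a`S" using f ne by (intro Min_in) auto
  then obtain x where "x \<in> S" "a x = Min (a`S)" by auto
  then show ?thesis using f by (metis Min_le finite_imageI imageI)
qed

lemma argmax: "finite S \<Longrightarrow> S \<noteq> {} \<Longrightarrow> \<exists>x\<in>S. \<forall>y\<in>S. (a::nat\<Rightarrow>real) y \<le> a x"
  using argmin[of S "\<lambda>i. - a i"] by auto

lemma GG_step:
  assumes "i < n" "j < n" "i \<noteq> j"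
    and s: "(\<exists>x. x \<in> UU n A \<union> LL n A \<and> x \<notin> UU n (insert (i,j) A) \<union> LL n (insert (i,j) A)) \<or> gam n A a"
    and g: "\<not> gam n (insert (i,j) A) a"
  shows "GG n (insert (i,j) A) a \<le> GG n A a - 1 \<and> (\<forall>b. GG n (insert (i,j) A) b \<le> GG n A a)"
proof -
  let ?S = "UU n A \<union> LL n A" and ?S' = "UU n (insert (i,j) A) \<union> LL n (insert (i,j) A)"
  have sub: "?S' \<subseteq> ?S" using UU_ins[OF assms(2)] LL_ins[OF assms(1)] by auto
  have le: "card ?S' \<le> card ?S" by (rule card_mono[OF _ sub]) simp
  have "card ?S' < card ?S \<or> gam n A a"
  proof (cases "gam n A a")
    case False
    then obtain x where "x \<in> ?S" "x \<notin> ?S'" using s by auto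
    then have "?S' \<subset> ?S" using sub by auto
    then show ?thesis by (intro disjI1 psubset_card_mono) simp
  qed simp
  then show ?thesis using le g unfolding GG_def by auto
qed

lemma GG_ge2: "n \<ge> 1 \<Longrightarrow> invar n A a \<Longrightarrow> GG n A a \<ge> 2"
proof -
  assume n1: "n \<ge> 1" and iv: "invar n A a"
  have c: "consistent a A" using iv unfolding invar_def by auto
  have ne: "UU n A \<noteq> {}" "LL n A \<noteq> {}" using UU_ne[OF n1 c] LL_ne[OF n1 c] .
  show ?thesis
  proof (cases "card (UU n A \<union> LL n A) \<ge> 2")
    case True then show ?thesis unfolding GG_def by simp
  next
    case False
    then have "card (UU n A \<union> LL n A) \<le> Suc 0" by simp
    then have eq: "\<forall>x\<in>UU n A \<union> LL n A. \<forall>y\<in>UU n A \<union> LL n A. x = y"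
      using card_le_Suc0_iff_eq[of "UU n A \<union> LL n A"] by simp
    obtain w where w: "w \<in> UU n A" using ne by auto
    obtain v where v: "v \<in> LL n A" using ne by auto
    have "w = v" using eq w v by (metis UnI1 UnI2)
    then have wl: "w \<in> LL n A" using v by simp
    have e1: "LL n A - UU n A = {}" using eq w by (metis Diff_eq_empty_iff UnI1 UnI2 subsetI)
    have e2: "UU n A - LL n A = {}" using eq wl by (metis Diff_eq_empty_iff UnI1 UnI2 subsetI)
    have g: "gam n A a" unfolding gam_def e1 e2 using w wl by blast
    have "card (UU n A \<union> LL n A) \<ge> 1" using w by (metis One_nat_def Suc_leI Un_iff card_gt_0_iff empty_iff finite_Un fin_UU fin_LL)
    then show ?thesis using g unfolding GG_def by simp
  qed
qed

lemma gam_ins: "i < n \<Longrightarrow> j < n \<Longrightarrow> gam n (insert (i,j) A) a \<longleftrightarrow>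
  (\<exists>w\<in>(UU n A - {i}) \<inter> (LL n A - {j}). (\<forall>q\<in>(LL n A - {j}) - (UU n A - {i}). a q < a w) \<and>
      (\<forall>p\<in>(UU n A - {i}) - (LL n A - {j}). a w < a p))"
  unfolding gam_def UU_ins LL_ins by simp

lemma ub2_move:
  assumes n1: "n \<ge> 1" and iv: "invar n A a" and nd: "\<not> determined n A"
  shows "\<exists>i<n. \<exists>j<n. i \<noteq> j \<and> a i < a j \<and> GG n (insert (i,j) A) a \<le> GG n A a - 1 \<and>
     (\<forall>b. GG n (insert (i,j) A) b \<le> GG n A a)"
proof -
  define U where "U = UU n A"
  define L where "L = LL n A"
  have ain: "a \<in> inputs n" using iv unfolding invar_def by auto
  have inj: "\<And>x y. x < n \<Longrightarrow> y < n \<Longrightarrow> x \<noteq> y \<Longrightarrow> a x \<noteq> a y" using inputs_inj[OF ain] by blast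
  have Un: "\<And>x. x \<in> U \<Longrightarrow> x < n" unfolding U_def using UU_lt by blast
  have Ln: "\<And>x. x \<in> L \<Longrightarrow> x < n" unfolding L_def using LL_lt by blast
  have fU: "finite U" "finite L" unfolding U_def L_def by auto
  define ok where "ok i j \<longleftrightarrow> i < n \<and> j < n \<and> i \<noteq> j \<and> a i < a j \<and>
     ((\<exists>x. x \<in> U \<union> L \<and> x \<notin> (U - {i}) \<union> (L - {j})) \<or> gam n A a) \<and>
     \<not> (\<exists>w\<in>(U - {i}) \<inter> (L - {j}). (\<forall>q\<in>(L - {j}) - (U - {i}). a q < a w) \<and>
      (\<forall>p\<in>(U - {i}) - (L - {j}). a w < a p))" for i j
  have suff: "\<exists>i j. ok i j"
  proof (cases "gam n A a")
    case True
    show ?thesis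
    proof (cases "card (U \<inter> L) \<ge> 2")
      case True
      have ne: "U \<inter> L \<noteq> {}" using True by auto
      obtain w1 where w1: "w1 \<in> U \<inter> L" "\<forall>y\<in>U \<inter> L. a w1 \<le> a y" using argmin[of "U \<inter> L" a] fU ne by auto
      have ne2: "U \<inter> L - {w1} \<noteq> {}" using True w1(1) two_elems[of "U \<inter> L" w1] fU by auto
      obtain w2 where w2: "w2 \<in> U \<inter> L - {w1}" "\<forall>y\<in>U \<inter> L - {w1}. a w2 \<le> a y"
        using argmin[of "U \<inter> L - {w1}" a] fU ne2 by auto
      have lt: "a w1 < a w2" using w1 w2 inj[of w1 w2] Un by (metis Diff_iff IntD1 insertI1 order_le_less)
      have "ok w1 w2" unfolding ok_def
      proof (intro conjI)
        show "w1 < n" "w2 < n" "w1 \<noteq> w2" "a w1 < a w2" using w1 w2 Un lt by auto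
        show "(\<exists>x. x \<in> U \<union> L \<and> x \<notin> (U - {w1}) \<union> (L - {w2})) \<or> gam n A a" using \<open>gam n A a\<close> by simp
        show "\<not> (\<exists>w\<in>(U - {w1}) \<inter> (L - {w2}). (\<forall>q\<in>(L - {w2}) - (U - {w1}). a q < a w) \<and>
            (\<forall>p\<in>(U - {w1}) - (L - {w2}). a w < a p))"
        proof
          assume "\<exists>w\<in>(U - {w1}) \<inter> (L - {w2}). (\<forall>q\<in>(L - {w2}) - (U - {w1}). a q < a w) \<and>
            (\<forall>p\<in>(U - {w1}) - (L - {w2}). a w < a p)"
          then obtain w where w: "w \<in> (U - {w1}) \<inter> (L - {w2})" "\<forall>p\<in>(U - {w1}) - (L - {w2}). a w < a p" by blast
          have "w2 \<in> (U - {w1}) - (L - {w2})" using w2 by auto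
          then have "a w < a w2" using w(2) by blast
          moreover have "a w2 \<le> a w" using w2(2) w(1) by blast
          ultimately show False by simp
        qed
      qed
      then show ?thesis by blast
    next
      case False
      obtain w where w: "w \<in> U \<inter> L" "\<forall>q\<in>L - U. a q < a w" "\<forall>p\<in>U - L. a w < a p"
        using \<open>gam n A a\<close> unfolding gam_def U_def L_def by blast
      have F: "U \<inter> L = {w}"
      proof -
        have "card (U \<inter> L) \<le> Suc 0" using False by simp
        then show ?thesis using w(1) card_le_Suc0_iff_eq[of "U \<inter> L"] fU by blast
      qed
      show ?thesis
      proof (cases "U - L = {}")
        case False
        then obtain p where p: "p \<in> U - L" by auto
        have "ok w p" unfolding ok_def
        proof (intro conjI)
          show "w < n" "p < n" "w \<noteq> p" "a w < a p" using w p Un by auto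
          show "(\<exists>x. x \<in> U \<union> L \<and> x \<notin> (U - {w}) \<union> (L - {p})) \<or> gam n A a" using \<open>gam n A a\<close> by simp
          show "\<not> (\<exists>w'\<in>(U - {w}) \<inter> (L - {p}). (\<forall>q\<in>(L - {p}) - (U - {w}). a q < a w') \<and>
            (\<forall>p'\<in>(U - {w}) - (L - {p}). a w' < a p'))" using F by blast
        qed
        then show ?thesis by blast
      next
        case UL: True
        show ?thesis
        proof (cases "L - U = {}")
          case False
          then obtain q where q: "q \<in> L - U" by auto
          have "ok q w" unfolding ok_def
          proof (intro conjI)
            show "q < n" "w < n" "q \<noteq> w" "a q < a w" using w q Ln by auto
            show "(\<exists>x. x \<in> U \<union> L \<and> x \<notin> (U - {q}) \<union> (L - {w})) \<or> gam n A a" using \<open>gam n A a\<close> by simp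
            show "\<not> (\<exists>w'\<in>(U - {q}) \<inter> (L - {w}). (\<forall>q'\<in>(L - {w}) - (U - {q}). a q' < a w') \<and>
              (\<forall>p'\<in>(U - {q}) - (L - {w}). a w' < a p'))" using F by blast
          qed
          then show ?thesis by blast
        next
          case True
          have "U = {w}" "L = {w}" using F UL True by auto
          then have "determined n A" using det1[OF n1] unfolding U_def L_def by simp
          then show ?thesis using nd by simp
        qed
      qed
    qed
  next
    case ng: False
    show ?thesis
    proof (cases "U \<inter> L = {}")
      case True
      have "card U \<ge> 2 \<or> card L \<ge> 2" using not_det_card[OF n1 nd] unfolding U_def L_def .
      then show ?thesis
      proof
        assume "card U \<ge> 2"
        then obtain x y where xy: "x \<in> U" "y \<in> U" "x \<noteq> y" using two_elems'[of U] fU by blast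
        have "\<exists>i j. i \<in> U \<and> j \<in> U \<and> i \<noteq> j \<and> a i < a j"
          using xy inj[of x y] Un by (metis linorder_neq_iff)
        then obtain i j where ij: "i \<in> U" "j \<in> U" "i \<noteq> j" "a i < a j" by blast
        have "ok i j" unfolding ok_def
        proof (intro conjI)
          show "i < n" "j < n" "i \<noteq> j" "a i < a j" using ij Un by auto
          show "(\<exists>x. x \<in> U \<union> L \<and> x \<notin> (U - {i}) \<union> (L - {j})) \<or> gam n A a"
            using ij True by blast
          show "\<not> (\<exists>w'\<in>(U - {i}) \<inter> (L - {j}). (\<forall>q'\<in>(L - {j}) - (U - {i}). a q' < a w') \<and>
              (\<forall>p'\<in>(U - {i}) - (L - {j}). a w' < a p'))" using True by blast
        qed
        then show ?thesis by blast
      next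
        assume "card L \<ge> 2"
        then obtain x y where xy: "x \<in> L" "y \<in> L" "x \<noteq> y" using two_elems'[of L] fU by blast
        have "\<exists>i j. i \<in> L \<and> j \<in> L \<and> i \<noteq> j \<and> a i < a j"
          using xy inj[of x y] Ln by (metis linorder_neq_iff)
        then obtain i j where ij: "i \<in> L" "j \<in> L" "i \<noteq> j" "a i < a j" by blast
        have "ok i j" unfolding ok_def
        proof (intro conjI)
          show "i < n" "j < n" "i \<noteq> j" "a i < a j" using ij Ln by auto
          show "(\<exists>x. x \<in> U \<union> L \<and> x \<notin> (U - {i}) \<union> (L - {j})) \<or> gam n A a"
            using ij True by blast
          show "\<not> (\<exists>w'\<in>(U - {i}) \<inter> (L - {j}). (\<forall>q'\<in>(L - {j}) - (U - {i}). a q' < a w') \<and>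
              (\<forall>p'\<in>(U - {i}) - (L - {j}). a w' < a p'))" using True by blast
        qed
        then show ?thesis by blast
      qed
    next
      case Fne: False
      have ngw: "\<And>w. w \<in> U \<inter> L \<Longrightarrow> (\<exists>q\<in>L - U. a w < a q) \<or> (\<exists>p\<in>U - L. a p < a w)"
      proof -
        fix w assume w: "w \<in> U \<inter> L"
        have "\<not> ((\<forall>q\<in>L - U. a q < a w) \<and> (\<forall>p\<in>U - L. a w < a p))"
          using ng w unfolding gam_def U_def L_def by blast
        then show "(\<exists>q\<in>L - U. a w < a q) \<or> (\<exists>p\<in>U - L. a p < a w)"
          using w inj Un Ln by (metis DiffE IntD1 IntD2 linorder_neqE_linordered_idom not_less)
      qed
      show ?thesis
      proof (cases "\<exists>p\<in>U - L. \<exists>w\<in>U \<inter> L. a p < a w")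
        case True
        have neP: "U - L \<noteq> {}" using True by auto
        obtain p0 where p0: "p0 \<in> U - L" "\<forall>y\<in>U - L. a p0 \<le> a y"
          using argmin[of "U - L" a] fU neP by auto
        define S where "S = {w\<in>U \<inter> L. a p0 < a w}"
        have neS: "S \<noteq> {}" using True p0 unfolding S_def by force
        obtain w0 where w0: "w0 \<in> S" "\<forall>y\<in>S. a w0 \<le> a y"
          using argmin[of S a] fU neS unfolding S_def by auto
        have "ok p0 w0" unfolding ok_def
        proof (intro conjI)
          show "p0 < n" "w0 < n" "p0 \<noteq> w0" "a p0 < a w0" using p0 w0 Un unfolding S_def by auto
          show "(\<exists>x. x \<in> U \<union> L \<and> x \<notin> (U - {p0}) \<union> (L - {w0})) \<or> gam n A a"
            using p0 by blast
          show "\<not> (\<exists>w'\<in>(U - {p0}) \<inter> (L - {w0}). (\<forall>q'\<in>(L - {w0}) - (U - {p0}). a q' < a w') \<and>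
              (\<forall>p'\<in>(U - {p0}) - (L - {w0}). a w' < a p'))"
          proof
            assume "\<exists>w'\<in>(U - {p0}) \<inter> (L - {w0}). (\<forall>q'\<in>(L - {w0}) - (U - {p0}). a q' < a w') \<and>
              (\<forall>p'\<in>(U - {p0}) - (L - {w0}). a w' < a p')"
            then obtain w' where w': "w' \<in> (U - {p0}) \<inter> (L - {w0})"
              "\<forall>q'\<in>(L - {w0}) - (U - {p0}). a q' < a w'" "\<forall>p'\<in>(U - {p0}) - (L - {w0}). a w' < a p'"
              by blast
            have w0U: "w0 \<in> (U - {p0}) - (L - {w0})" using w0 p0 unfolding S_def by auto
            have c1: "a w' < a w0" using w'(3) w0U by blast
            have "w' \<in> U \<inter> L" using w'(1) by auto
            then show False
            proof (rule ngw[THEN disjE])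
              assume "\<exists>q\<in>L - U. a w' < a q"
              then obtain q where q: "q \<in> L - U" "a w' < a q" by blast
              have "q \<in> (L - {w0}) - (U - {p0})" using q w0 unfolding S_def by auto
              then have "a q < a w'" using w'(2) by blast
              then show False using q(2) by simp
            next
              assume "\<exists>p\<in>U - L. a p < a w'"
              then obtain p where p: "p \<in> U - L" "a p < a w'" by blast
              have "a p0 \<le> a p" using p0(2) p(1) by blast
              then have "a p0 < a w'" using p(2) by simp
              then have "w' \<in> S" using w'(1) unfolding S_def by auto
              then have "a w0 \<le> a w'" using w0(2) by blast
              then show False using c1 by simp
            qed
          qed
        qed
        then show ?thesis by blast
      next
        case False
        obtain wf where wf: "wf \<in> U \<inter> L" using Fne by auto
        have "\<exists>q\<in>L - U. \<exists>w\<in>U \<inter> L. a w < a q" using ngw[OF wf] False wf by blast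
        then have neQ: "L - U \<noteq> {}" by auto
        obtain q0 where q0: "q0 \<in> L - U" "\<forall>y\<in>L - U. a y \<le> a q0"
          using argmax[of "L - U" a] fU neQ by auto
        define S where "S = {w\<in>U \<inter> L. a w < a q0}"
        have neS: "S \<noteq> {}" using \<open>\<exists>q\<in>L - U. \<exists>w\<in>U \<inter> L. a w < a q\<close> q0 unfolding S_def by force
        obtain w0 where w0: "w0 \<in> S" "\<forall>y\<in>S. a y \<le> a w0"
          using argmax[of S a] fU neS unfolding S_def by auto
        have "ok w0 q0" unfolding ok_def
        proof (intro conjI)
          show "w0 < n" "q0 < n" "w0 \<noteq> q0" "a w0 < a q0" using q0 w0 Ln unfolding S_def by auto
          show "(\<exists>x. x \<in> U \<union> L \<and> x \<notin> (U - {w0}) \<union> (L - {q0})) \<or> gam n A a"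
            using q0 by blast
          show "\<not> (\<exists>w'\<in>(U - {w0}) \<inter> (L - {q0}). (\<forall>q'\<in>(L - {q0}) - (U - {w0}). a q' < a w') \<and>
              (\<forall>p'\<in>(U - {w0}) - (L - {q0}). a w' < a p'))"
          proof
            assume "\<exists>w'\<in>(U - {w0}) \<inter> (L - {q0}). (\<forall>q'\<in>(L - {q0}) - (U - {w0}). a q' < a w') \<and>
              (\<forall>p'\<in>(U - {w0}) - (L - {q0}). a w' < a p')"
            then obtain w' where w': "w' \<in> (U - {w0}) \<inter> (L - {q0})"
              "\<forall>q'\<in>(L - {q0}) - (U - {w0}). a q' < a w'" "\<forall>p'\<in>(U - {w0}) - (L - {q0}). a w' < a p'"
              by blast
            have w0L: "w0 \<in> (L - {q0}) - (U - {w0})" using w0 q0 unfolding S_def by auto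
            have c1: "a w0 < a w'" using w'(2) w0L by blast
            have "w' \<in> U \<inter> L" using w'(1) by auto
            then show False
            proof (rule ngw[THEN disjE])
              assume "\<exists>q\<in>L - U. a w' < a q"
              then obtain q where q: "q \<in> L - U" "a w' < a q" by blast
              have "a q \<le> a q0" using q0(2) q(1) by blast
              then have "a w' < a q0" using q(2) by simp
              then have "w' \<in> S" using w'(1) unfolding S_def by auto
              then have "a w' \<le> a w0" using w0(2) by blast
              then show False using c1 by simp
            next
              assume "\<exists>p\<in>U - L. a p < a w'"
              then obtain p where p: "p \<in> U - L" "a p < a w'" by blast
              have "p \<in> (U - {w0}) - (L - {q0})" using p w0 unfolding S_def by auto
              then have "a w' < a p" using w'(3) by blast
              then show False using p(2) by simp
            qed
          qed
        qed
        then show ?thesis by blast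
      qed
    qed
  qed
  then obtain i j where ij: "ok i j" by blast
  have st: "GG n (insert (i,j) A) a \<le> GG n A a - 1 \<and> (\<forall>b. GG n (insert (i,j) A) b \<le> GG n A a)"
  proof (rule GG_step)
    show "i < n" "j < n" "i \<noteq> j" using ij unfolding ok_def by auto
    show "(\<exists>x. x \<in> UU n A \<union> LL n A \<and> x \<notin> UU n (insert (i, j) A) \<union> LL n (insert (i, j) A)) \<or> gam n A a"
      using ij unfolding ok_def U_def L_def using UU_ins LL_ins by simp
    show "\<not> gam n (insert (i, j) A) a"
      using ij gam_ins[of i n j A a] unfolding ok_def U_def L_def by simp
  qed
  show ?thesis using ij st unfolding ok_def by blast
qed

lemma answer_lt: "a i < a j \<Longrightarrow> answer a i j = (i,j)"
  unfolding answer_def by simp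

lemma ub2: "n \<ge> 1 \<Longrightarrow> invar n A a \<Longrightarrow> GG n A a + int k \<le> int m + 2 \<Longrightarrow> qwin m n A a k"
proof (induction m arbitrary: A a k)
  case (0 A a k)
  have "determined n A"
  proof (rule ccontr)
    assume "\<not> determined n A"
    then obtain i j where ij: "i < n" "j < n" "i \<noteq> j" "a i < a j" "GG n (insert (i,j) A) a \<le> GG n A a - 1"
      using ub2_move[OF 0(1,2)] by blast
    have "invar n (insert (i,j) A) a" using inv_insert[OF 0(2) ij(1,2,4)] .
    then have "GG n (insert (i,j) A) a \<ge> 2" using GG_ge2 0(1) by blast
    then have "GG n A a \<ge> 3" using ij(5) by linarith
    then show False using 0(3) by linarith
  qed
  then show ?case by simp
next
  case (Suc m A a k)
  show ?case
  proof (cases "determined n A")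
    case True then show ?thesis by simp
  next
    case False
    then obtain i j where ij: "i < n" "j < n" "i \<noteq> j" "a i < a j" "GG n (insert (i,j) A) a \<le> GG n A a - 1"
       "\<forall>b. GG n (insert (i,j) A) b \<le> GG n A a"
      using ub2_move[OF Suc(2,3)] by blast
    have invar': "invar n (insert (i,j) A) a" using inv_insert[OF Suc(3) ij(1,2,4)] .
    have G': "GG n (insert (i,j) A) a + int k \<le> int m + 2" using ij(5) Suc(4) by auto
    have q1: "qwin m n (insert (i,j) A) a k" using Suc.IH[OF Suc(2) invar' G'] .
    have q2: "\<forall>b\<in>inputs n. 0 < k \<and> b \<noteq> a \<and> consistent b (insert (i,j) A) \<longrightarrow>
        qwin m n (insert (i,j) A) b (k - 1)"
    proof (intro ballI impI)
      fix b assume b: "b \<in> inputs n" "0 < k \<and> b \<noteq> a \<and> consistent b (insert (i,j) A)"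
      have g: "GG n (insert (i,j) A) b \<le> GG n A a" using ij(6) by blast
      have "int (k - 1) = int k - 1" using b(2) by (simp add: of_nat_diff)
      then have "GG n (insert (i,j) A) b + int (k - 1) \<le> int m + 2" using g Suc(4) by simp
      then show "qwin m n (insert (i,j) A) b (k - 1)"
        using Suc.IH[OF Suc(2) inv_change[OF invar' b(1)]] b by blast
    qed
    have L: "let A' = insert (answer a i j) A in qwin m n A' a k \<and>
           (\<forall>b\<in>inputs n. 0 < k \<and> b \<noteq> a \<and> consistent b A' \<longrightarrow> qwin m n A' b (k - 1))"
      unfolding Let_def answer_lt[of a i j, OF ij(4)] using q1 q2 by blast
    have "\<exists>i<n. \<exists>j<n. i \<noteq> j \<and> (let A' = insert (answer a i j) A in qwin m n A' a k \<and>
           (\<forall>b\<in>inputs n. 0 < k \<and> b \<noteq> a \<and> consistent b A' \<longrightarrow> qwin m n A' b (k - 1)))"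
      by (rule exI[of _ i], rule conjI[OF ij(1)], rule exI[of _ j], rule conjI[OF ij(2)], rule conjI[OF ij(3)], rule L)
    then show ?thesis by (simp only: qwin.simps(2) disj_not1) simp
  qed
qed

definition Lam :: "nat \<Rightarrow> (nat \<times> nat) set \<Rightarrow> (nat \<Rightarrow> real) \<Rightarrow> real \<Rightarrow> int" where
  "Lam n A a v = int (card {x\<in>UU n A. v \<le> a x}) + int (card {y\<in>LL n A. a y \<le> v}) - 2"

definition Psi :: "nat \<Rightarrow> (nat \<times> nat) set \<Rightarrow> nat \<Rightarrow> int" where
  "Psi n A k = int (card (UU n A)) + int (card (LL n A)) - int (card (UU n A \<inter> LL n A)) - 2
     + min (int k + 1) ((int (card (UU n A \<inter> LL n A)) + 1) div 2)"

definition sandw :: "nat \<Rightarrow> (nat \<times> nat) set \<Rightarrow> (nat \<Rightarrow> real) \<Rightarrow> bool" where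
  "sandw n A a \<longleftrightarrow> (\<forall>x\<in>LL n A. \<forall>z\<in>UU n A. (x \<notin> UU n A \<or> z \<notin> LL n A) \<longrightarrow> a x < a z)"

lemma lam_step:
  assumes "i < n" "j < n" "a i < a j"
  shows "Lam n (insert (i,j) A) a v \<ge> Lam n A a v - 1"
proof -
  have e1: "{x\<in>UU n (insert (i,j) A). v \<le> a x} = {x\<in>UU n A. v \<le> a x} - {i}"
    unfolding UU_ins[OF assms(2)] by auto
  have e2: "{y\<in>LL n (insert (i,j) A). a y \<le> v} = {y\<in>LL n A. a y \<le> v} - {j}"
    unfolding LL_ins[OF assms(1)] by auto
  have f1: "finite {x\<in>UU n A. v \<le> a x}" by simp
  have f2: "finite {y\<in>LL n A. a y \<le> v}" by simp
  have "\<not> (i \<in> {x\<in>UU n A. v \<le> a x} \<and> j \<in> {y\<in>LL n A. a y \<le> v})" using assms(3) by auto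
  then show ?thesis unfolding Lam_def e1 e2 int_card_Diff1[OF f1] int_card_Diff1[OF f2] by auto
qed

lemma det_small:
  assumes "n \<ge> 1" "invar n A a" "determined n A"
  shows "card (UU n A) = 1" "card (LL n A) = 1"
  using det2[OF assms(2,3)] cards_basic[OF assms(1,2)] by auto

lemma Lam_det: "n \<ge> 1 \<Longrightarrow> invar n A a \<Longrightarrow> determined n A \<Longrightarrow> Lam n A a v \<le> 0"
proof -
  assume a: "n \<ge> 1" "invar n A a" "determined n A"
  have "card {x\<in>UU n A. v \<le> a x} \<le> card (UU n A)" by (rule card_mono) auto
  moreover have "card {y\<in>LL n A. a y \<le> v} \<le> card (LL n A)" by (rule card_mono) auto
  ultimately show ?thesis using det_small[OF a] unfolding Lam_def by simp
qed

lemma Psi_det: "n \<ge> 1 \<Longrightarrow> invar n A a \<Longrightarrow> determined n A \<Longrightarrow> Psi n A k \<le> 0"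
proof -
  assume a: "n \<ge> 1" "invar n A a" "determined n A"
  have "card (UU n A \<inter> LL n A) \<le> 1" using cards_basic(3)[OF a(1,2)] det_small[OF a] by simp
  then consider "card (UU n A \<inter> LL n A) = 0" | "card (UU n A \<inter> LL n A) = 1" by linarith
  then show ?thesis using det_small[OF a] unfolding Psi_def by cases auto
qed

lemma qwin_Suc_E:
  assumes "qwin (Suc m) n A a k" "\<not> determined n A"
  obtains i j where "i < n" "j < n" "i \<noteq> j" "qwin m n (insert (answer a i j) A) a k"
    "\<forall>b\<in>inputs n. 0 < k \<and> b \<noteq> a \<and> consistent b (insert (answer a i j) A) \<longrightarrow>
        qwin m n (insert (answer a i j) A) b (k - 1)"
  using assms by (auto simp: Let_def)

lemma lb0: "n \<ge> 1 \<Longrightarrow> invar n A a \<Longrightarrow> int m < Lam n A a v \<Longrightarrow> \<not> qwin m n A a 0"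
proof (induction m arbitrary: A)
  case (0 A)
  have "\<not> determined n A" using Lam_det[OF 0(1,2), where v=v] 0(3) by force
  then show ?case by simp
next
  case (Suc m A)
  have nd: "\<not> determined n A" using Lam_det[OF Suc(2,3), where v=v] Suc(4) by force
  have ain: "a \<in> inputs n" using Suc(3) unfolding invar_def by auto
  show ?case
  proof
    assume "qwin (Suc m) n A a 0"
    then obtain i j where ij: "i < n" "j < n" "i \<noteq> j" "qwin m n (insert (answer a i j) A) a 0"
      using qwin_Suc_E[OF _ nd] by metis
    obtain x y where xy: "answer a i j = (x,y)" "a x < a y" "x < n" "y < n"
      using answer_props[OF ain ij(1,2,3)] by metis
    have iv: "invar n (insert (x,y) A) a" using inv_insert[OF Suc(3) xy(3,4,2)] .
    have "Lam n (insert (x,y) A) a v \<ge> Lam n A a v - 1" using lam_step[OF xy(3,4,2)] .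
    then have "int m < Lam n (insert (x,y) A) a v" using Suc(4) by simp
    then have "\<not> qwin m n (insert (x,y) A) a 0" using Suc.IH[OF Suc(2) iv] by blast
    then show False using ij(4) xy(1) by simp
  qed
qed

lemma Psi_Lam:
  assumes n1: "n \<ge> 1" and iv: "invar n A a" and sw: "sandw n A a"
  shows "\<exists>v. Psi n A 0 \<le> Lam n A a v"
proof -
  let ?U = "UU n A" and ?L = "LL n A"
  have c: "consistent a A" using iv unfolding invar_def by auto
  obtain w where w: "w \<in> ?L" "\<forall>y\<in>?L. a y \<le> a w" using argmax[of ?L a] LL_ne[OF n1 c] by auto
  have e2: "{y\<in>?L. a y \<le> a w} = ?L" using w by auto
  have sub: "(?U - ?L) \<union> (?U \<inter> {w}) \<subseteq> {x\<in>?U. a w \<le> a x}"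
  proof
    fix x assume x: "x \<in> (?U - ?L) \<union> (?U \<inter> {w})"
    then show "x \<in> {x\<in>?U. a w \<le> a x}"
    proof
      assume "x \<in> ?U - ?L"
      then have "a w < a x" using sw w(1) unfolding sandw_def by blast
      then show ?thesis using \<open>x \<in> ?U - ?L\<close> by simp
    qed auto
  qed
  have c1: "card ((?U - ?L) \<union> (?U \<inter> {w})) \<le> card {x\<in>?U. a w \<le> a x}" by (rule card_mono[OF _ sub]) simp
  have c2: "card ((?U - ?L) \<union> (?U \<inter> {w})) = card (?U - ?L) + card (?U \<inter> {w})"
    by (rule card_Un_disjoint) (use w in auto)
  have c3: "int (card (?U - ?L)) = int (card ?U) - int (card (?U \<inter> ?L))"
    by (metis card_Diff_subset_Int fin_UU finite_Int inf_le1 card_mono of_nat_diff)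
  have c4: "card (?U \<inter> ?L) \<ge> 1 \<Longrightarrow> w \<in> ?U"
  proof (rule ccontr)
    assume "card (?U \<inter> ?L) \<ge> 1" "w \<notin> ?U"
    then obtain f where f: "f \<in> ?U \<inter> ?L" by (metis card.empty ex_in_conv not_one_le_zero)
    have "a w < a f" using sw w(1) f \<open>w \<notin> ?U\<close> unfolding sandw_def by blast
    moreover have "a f \<le> a w" using w(2) f by blast
    ultimately show False by simp
  qed
  have c5: "min (1::int) ((int (card (?U \<inter> ?L)) + 1) div 2) \<le> int (card (?U \<inter> {w}))"
  proof (cases "card (?U \<inter> ?L) \<ge> 1")
    case True
    then have "?U \<inter> {w} = {w}" using c4 by auto
    then show ?thesis by simp
  next
    case False then show ?thesis by simp
  qed
  have "Psi n A 0 \<le> Lam n A a (a w)"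
    unfolding Psi_def Lam_def e2 using c1 c2 c3 c5 by simp
  then show ?thesis by blast
qed

lemma arith_psi0:
  fixes P Q Fi Fj e d k :: int
  assumes "P = 1 \<and> Q = 1 \<longrightarrow> Fi = 1 \<and> Fj = 1" "Fi \<le> P" "Fj \<le> Q"
    "0 \<le> Fi" "0 \<le> Fj" "P \<le> 1" "Q \<le> 1" "0 \<le> P" "0 \<le> Q" "Fi \<le> 1" "Fj \<le> 1"
    "e \<ge> d - 1" "Fi = 0 \<and> Fj = 0 \<longrightarrow> e = d" "k \<ge> 0"
  shows "- P - Q + Fi + Fj + min (k + 1) e \<ge> min (k + 1) d - 1"
    and "Fi + Fj \<ge> 1 \<Longrightarrow> k \<ge> 1 \<Longrightarrow> - P - Q + Fi + Fj + min k e \<ge> min (k + 1) d - 1"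
  using assms by (smt (verit))+

lemma div_fact: "0 \<le> (x::int) \<Longrightarrow> x \<le> 2 \<Longrightarrow> (c - x + 1) div 2 \<ge> (c + 1) div 2 - 1"
  by presburger

lemma sandw_step:
  assumes ij: "i < n" "j < n" "i \<noteq> j" "a i < a j" and sw: "sandw n A a"
  shows "Psi n (insert (i,j) A) k \<ge> Psi n A k - 1"
    and "\<not> sandw n (insert (i,j) A) a \<Longrightarrow> k > 0 \<Longrightarrow> Psi n (insert (i,j) A) (k - 1) \<ge> Psi n A k - 1"
proof -
  let ?U = "UU n A" and ?L = "LL n A"
  define P where "P = (if i \<in> ?U then 1 else 0::int)"
  define Q where "Q = (if j \<in> ?L then 1 else 0::int)"
  define Fi where "Fi = (if i \<in> ?U \<inter> ?L then 1 else 0::int)"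
  define Fj where "Fj = (if j \<in> ?U \<inter> ?L then 1 else 0::int)"
  define cf where "cf = int (card (?U \<inter> ?L))"
  define d where "d = (cf + 1) div 2"
  define e where "e = (cf - Fi - Fj + 1) div 2"
  have key: "i \<in> ?U \<Longrightarrow> j \<in> ?L \<Longrightarrow> i \<in> ?L \<and> j \<in> ?U"
  proof (rule ccontr)
    assume a: "i \<in> ?U" "j \<in> ?L" "\<not> (i \<in> ?L \<and> j \<in> ?U)"
    then have "a j < a i" using sw unfolding sandw_def by blast
    then show False using ij(4) by simp
  qed
  have cfge: "cf \<ge> Fi + Fj"
  proof -
    have "{i,j} \<inter> (?U \<inter> ?L) \<subseteq> ?U \<inter> ?L" by auto
    then have "card ({i,j} \<inter> (?U \<inter> ?L)) \<le> card (?U \<inter> ?L)" by (intro card_mono) auto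
    moreover have "int (card ({i,j} \<inter> (?U \<inter> ?L))) = Fi + Fj"
      unfolding Fi_def Fj_def using ij(3) by (auto simp: Int_insert_left)
    ultimately show ?thesis unfolding cf_def by linarith
  qed
  have h1: "P = 1 \<and> Q = 1 \<longrightarrow> Fi = 1 \<and> Fj = 1"
  proof (intro impI)
    assume "P = 1 \<and> Q = 1"
    then have iu: "i \<in> ?U" and jl: "j \<in> ?L" unfolding P_def Q_def by (auto split: if_splits)
    then have "i \<in> ?L \<and> j \<in> ?U" using key by blast
    then show "Fi = 1 \<and> Fj = 1" unfolding Fi_def Fj_def using iu jl by simp
  qed
  have h2: "Fi \<le> P" "Fj \<le> Q" unfolding P_def Q_def Fi_def Fj_def by simp_all
  have h3: "0 \<le> Fi" "0 \<le> Fj" "P \<le> 1" "Q \<le> 1" "0 \<le> P" "0 \<le> Q" "Fi \<le> 1" "Fj \<le> 1"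
    unfolding P_def Q_def Fi_def Fj_def by simp_all
  note hyp = h1 h2 h3
  have ed: "e \<ge> d - 1" "Fi = 0 \<and> Fj = 0 \<longrightarrow> e = d"
    unfolding e_def d_def using hyp(4,5,10,11) div_fact[of "Fi + Fj" cf] by (simp_all add: algebra_simps)
  have ci: "int (card (UU n (insert (i,j) A))) = int (card ?U) - P"
     "int (card (LL n (insert (i,j) A))) = int (card ?L) - Q"
     "int (card (UU n (insert (i,j) A) \<inter> LL n (insert (i,j) A))) = cf - Fi - Fj"
    using card_ins[OF ij(1,2,3), of A] unfolding P_def Q_def Fi_def Fj_def cf_def by auto
  have psi': "Psi n (insert (i,j) A) k' = int (card ?U) + int (card ?L) - cf - 2 - P - Q + Fi + Fj + min (int k' + 1) e" for k'
    unfolding Psi_def ci e_def by simp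
  have psi: "Psi n A k = int (card ?U) + int (card ?L) - cf - 2 + min (int k + 1) d"
    unfolding Psi_def cf_def d_def by simp
  show "Psi n (insert (i,j) A) k \<ge> Psi n A k - 1"
    unfolding psi' psi using arith_psi0(1)[OF hyp ed, of "int k"] by simp
  assume ns: "\<not> sandw n (insert (i,j) A) a" and k: "k > 0"
  have "Fi + Fj \<ge> 1"
  proof (rule ccontr)
    assume "\<not> Fi + Fj \<ge> 1"
    then have "i \<notin> ?U \<inter> ?L" "j \<notin> ?U \<inter> ?L" unfolding Fi_def Fj_def using hyp by (auto split: if_splits)
    then have "sandw n (insert (i,j) A) a" using sw unfolding sandw_def UU_ins[OF ij(2)] LL_ins[OF ij(1)]
      by blast
    then show False using ns by simp
  qed
  moreover have "int (k - 1) + 1 = int k" using k by simp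
  ultimately show "Psi n (insert (i,j) A) (k - 1) \<ge> Psi n A k - 1"
    unfolding psi' psi using arith_psi0(2)[OF hyp ed, of "int k"] k by simp
qed


lemma exist_sandw:
  assumes iv: "invar n A a"
  shows "\<exists>b\<in>inputs n. consistent b A \<and> sandw n A b"
proof -
  let ?U = "UU n A" and ?L = "LL n A"
  have a: "a \<in> inputs n" "consistent a A" "\<forall>(x,y)\<in>A. x < n \<and> y < n"
    using iv unfolding invar_def by auto
  define R where "R = (\<Sum>i<n. \<bar>a i\<bar>)"
  have R: "\<And>i. i < n \<Longrightarrow> \<bar>a i\<bar> \<le> R"
    unfolding R_def by (rule member_le_sum) auto
  define C where "C = 2 * R + 1"
  define b where "b x = (if x < n then (if x \<in> ?L \<and> x \<notin> ?U then a x - C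
      else if x \<in> ?U \<and> x \<notin> ?L then a x + C else a x) else 0)" for x
  have inj: "\<And>x y. x < n \<Longrightarrow> y < n \<Longrightarrow> x \<noteq> y \<Longrightarrow> a x \<noteq> a y" using inputs_inj[OF a(1)] by blast
  have binj: "inj_on b {..<n}"
  proof (rule inj_onI)
    fix x y assume xy: "x \<in> {..<n}" "y \<in> {..<n}" "b x = b y"
    show "x = y"
    proof (rule ccontr)
      assume ne: "x \<noteq> y"
      have rx: "\<bar>a x\<bar> \<le> R" and ry: "\<bar>a y\<bar> \<le> R" using R xy by auto
      have "a x \<noteq> a y" using inj xy ne by auto
      then show False using xy(3) rx ry xy(1,2) unfolding b_def C_def
        by (auto split: if_splits)
    qed
  qed
  have bin: "b \<in> inputs n" unfolding inputs_def using binj by (auto simp: b_def)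
  have bc: "consistent b A" unfolding consistent_def
  proof clarify
    fix x y assume xy: "(x,y) \<in> A"
    have n: "x < n" "y < n" using a(3) xy by auto
    have "x \<notin> ?U" using xy n unfolding UU_def by auto
    moreover have "y \<notin> ?L" using xy n unfolding LL_def by auto
    moreover have "a x < a y" using a(2) xy unfolding consistent_def by auto
    moreover have "C \<ge> 0" using R[of 0] n unfolding C_def by (cases "n = 0") auto
    ultimately show "b x < b y" using n unfolding b_def by auto
  qed
  have bs: "sandw n A b" unfolding sandw_def
  proof (intro ballI impI)
    fix x z assume xz: "x \<in> ?L" "z \<in> ?U" "x \<notin> ?U \<or> z \<notin> ?L"
    have n: "x < n" "z < n" using xz LL_lt UU_lt by auto
    have rx: "\<bar>a x\<bar> \<le> R" and rz: "\<bar>a z\<bar> \<le> R" using R n by auto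
    show "b x < b z" using xz n rx rz unfolding b_def C_def by auto
  qed
  show ?thesis using bin bc bs by blast
qed

lemma lbk: "n \<ge> 1 \<Longrightarrow> invar n A a \<Longrightarrow> sandw n A a \<Longrightarrow> int m < Psi n A k \<Longrightarrow> \<not> qwin m n A a k"
proof (induction m arbitrary: A a k)
  case (0 A a k)
  have "\<not> determined n A" using Psi_det[OF 0(1,2), where k=k] 0(4) by force
  then show ?case by simp
next
  case (Suc m A a k)
  show ?case
  proof (cases "k = 0")
    case True
    obtain v where "Psi n A 0 \<le> Lam n A a v" using Psi_Lam[OF Suc(2,3,4)] by blast
    then have "int (Suc m) < Lam n A a v" using Suc(5) True by simp
    then show ?thesis using lb0[OF Suc(2,3)] True by blast
  next
    case False
    have nd: "\<not> determined n A" using Psi_det[OF Suc(2,3), where k=k] Suc(5) by force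
    have ain: "a \<in> inputs n" using Suc(3) unfolding invar_def by auto
    show ?thesis
    proof
      assume "qwin (Suc m) n A a k"
      then obtain i j where ij: "i < n" "j < n" "i \<noteq> j" "qwin m n (insert (answer a i j) A) a k"
        "\<forall>b\<in>inputs n. 0 < k \<and> b \<noteq> a \<and> consistent b (insert (answer a i j) A) \<longrightarrow>
          qwin m n (insert (answer a i j) A) b (k - 1)"
        using qwin_Suc_E[OF _ nd] by metis
      obtain x y where xy: "answer a i j = (x,y)" "a x < a y" "x < n" "y < n" "x \<noteq> y"
        using answer_props[OF ain ij(1,2,3)] by metis
      have iv: "invar n (insert (x,y) A) a" using inv_insert[OF Suc(3) xy(3,4,2)] .
      have q1: "qwin m n (insert (x,y) A) a k" using ij(4) xy(1) by simp
      have q2: "\<forall>b\<in>inputs n. 0 < k \<and> b \<noteq> a \<and> consistent b (insert (x,y) A) \<longrightarrow>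
          qwin m n (insert (x,y) A) b (k - 1)" using ij(5) xy(1) by simp
      show False
      proof (cases "sandw n (insert (x,y) A) a")
        case True
        have "Psi n (insert (x,y) A) k \<ge> Psi n A k - 1" using sandw_step(1)[OF xy(3,4,5,2) Suc(4)] .
        then have "int m < Psi n (insert (x,y) A) k" using Suc(5) by simp
        then show False using Suc.IH[OF Suc(2) iv True] q1 by blast
      next
        case ns: False
        obtain b where b: "b \<in> inputs n" "consistent b (insert (x,y) A)" "sandw n (insert (x,y) A) b"
          using exist_sandw[OF iv] by blast
        have bne: "b \<noteq> a" using b(3) ns by auto
        have "Psi n (insert (x,y) A) (k - 1) \<ge> Psi n A k - 1"
          using sandw_step(2)[OF xy(3,4,5,2) Suc(4) ns] False by simp
        then have "int m < Psi n (insert (x,y) A) (k - 1)" using Suc(5) by simp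
        moreover have "qwin m n (insert (x,y) A) b (k - 1)" using q2 b bne False by blast
        ultimately show False using Suc.IH[OF Suc(2) inv_change[OF iv b(1,2)] b(3)] by blast
      qed
    qed
  qed
qed

lemma UU_empty: "UU n {} = {..<n}" unfolding UU_def by auto
lemma LL_empty: "LL n {} = {..<n}" unfolding LL_def by auto

lemma ceil_3n: "\<lceil>3 * real n / 2\<rceil> = int n + int ((n + 1) div 2)"
proof (cases "even n")
  case True
  then obtain t where t: "n = 2 * t" by blast
  have "\<lceil>3 * real n / 2\<rceil> = int (3 * t)"
  proof (rule ceiling_unique)
    show "real_of_int (int (3 * t)) - 1 < 3 * real n / 2" using t by simp
    show "3 * real n / 2 \<le> real_of_int (int (3 * t))" using t by simp
  qed
  moreover have "(n + 1) div 2 = t" using t by simp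
  ultimately show ?thesis using t by simp
next
  case False
  then obtain t where t: "n = 2 * t + 1" using oddE by blast
  have "(n + 1) div 2 = t + 1" using t by simp
  moreover have "\<lceil>3 * real n / 2\<rceil> = int (3 * t + 2)"
  proof (rule ceiling_unique)
    show "real_of_int (int (3 * t + 2)) - 1 < 3 * real n / 2" using t by simp
    show "3 * real n / 2 \<le> real_of_int (int (3 * t + 2))" using t by simp
  qed
  ultimately show ?thesis using t by simp
qed

theorem theorem1:
  fixes n k :: nat
  assumes "n \<ge> 1"
  shows "int (D k n) = min (int n + int k - 1) (\<lceil>3 * real n / 2\<rceil> - 2)"
proof -
  define V where "V = min (n + k - 1) (n + (n + 1) div 2 - 2)"
  have c1: "(n + 1) div 2 \<ge> 1" using assms by simp
  have i1: "int (n + k - 1) = int n + int k - 1" using assms by (simp add: of_nat_diff)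
  have i2: "int (n + (n + 1) div 2 - 2) = int n + int ((n + 1) div 2) - 2" using assms c1 by (simp add: of_nat_diff)
  have Vint: "int V = min (int n + int k - 1) (\<lceil>3 * real n / 2\<rceil> - 2)"
    unfolding V_def ceil_3n of_nat_min i1 i2 by simp
  have inv0: "invar n {} a" if "a \<in> inputs n" for a
    using that unfolding invar_def by simp
  have up: "\<forall>a\<in>inputs n. qwin V n {} a k"
  proof
    fix a assume a: "a \<in> inputs n"
    show "qwin V n {} a k"
    proof (cases "n + k - 1 \<le> n + (n + 1) div 2 - 2")
      case True
      then have V: "V = n + k - 1" unfolding V_def by simp
      have "0 < n" using assms by simp
      then have g: "gam n {} a" unfolding gam_def UU_empty LL_empty by blast
      have "GG n {} a = int n + 1" unfolding GG_def UU_empty LL_empty using g by simp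
      then have "GG n {} a + int k \<le> int V + 2" unfolding V using assms by simp
      then show ?thesis using ub2[OF assms inv0[OF a]] by blast
    next
      case False
      then have V: "V = n + (n + 1) div 2 - 2" unfolding V_def by simp
      have "G2 n {} = int n + int n - int n div 2" unfolding G2_def UU_empty LL_empty by simp
      then have "G2 n {} \<le> int V + 2" unfolding V using assms by (simp add: of_nat_diff)
      then show ?thesis using ub1[OF assms inv0[OF a]] by blast
    qed
  qed
  define a0 where "a0 i = (if i < n then real i else 0)" for i
  have a0in: "a0 \<in> inputs n" unfolding inputs_def a0_def inj_on_def by auto
  have sw0: "sandw n {} a0" unfolding sandw_def UU_empty LL_empty by auto
  have psi0: "Psi n {} k = int V"
    unfolding Psi_def UU_empty LL_empty V_def of_nat_min i1 i2 by simp
  have low: "\<not> qwin m n {} a0 k" if "m < V" for m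
    using lbk[OF assms inv0[OF a0in] sw0] psi0 that by simp
  have "D k n = V"
    unfolding D_def
  proof (rule Least_equality)
    show "\<forall>a\<in>inputs n. qwin V n {} a k" by (rule up)
    fix m assume "\<forall>a\<in>inputs n. qwin m n {} a k"
    then show "V \<le> m" using low a0in by (meson not_le)
  qed
  then show ?thesis using Vint by simp
qed

end
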